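(* In anonymous graphs of maximum degree $4$, there exists a randomized strategy (an oracle placement of quantum pebbles together with an oblivious agent's measurement-based rule), using at most a single quantum pebble at each node and $D$ quantum pebbles in total, with which the agent finds the treasure in $D$ steps with probability close to $1$, where $D$ is the length of a shortest path from the agent's starting node to the treasure. The agent needs to make $O(\log D)$ measurements at each node.
   Context: Anonymous graph: connected simple undirected graph with unlabelled, indistinguishable nodes; the edges at each node carry distinct local port numbers. An agent starts at a source node and must reach a stationary treasure node; $D$ is the shortest-path distance between them. In each round the agent learns the degree of its current node (and, here, can measure qubits emitted by a quantum pebble at that node), computes, and moves along at most one edge. The agent is oblivious: it retains no memory between rounds. A quantum pebble is a source placed at a node by an oracle (which knows the instance) that repeatedly emits qubits, all in the same quantum state unknown to the agent; the agent can perform projective single-qubit measurements in chosen orthonormal bases on as many emitted copies as it wants. *)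

theory Defs
  imports "HOL-Probability.Probability"
begin

text \<open>A graph is given by a vertex set V, a degree function deg and a port function
  nbr: nbr v i is the neighbour of v reached through local port i (i < deg v).\<close>

definition adj :: "('v \<Rightarrow> nat) \<Rightarrow> ('v \<Rightarrow> nat \<Rightarrow> 'v) \<Rightarrow> 'v \<Rightarrow> 'v \<Rightarrow> bool" where
  "adj deg nbr u v \<longleftrightarrow> (\<exists>i<deg u. nbr u i = v)"

inductive reach_in :: "('v \<Rightarrow> nat) \<Rightarrow> ('v \<Rightarrow> nat \<Rightarrow> 'v) \<Rightarrow> nat \<Rightarrow> 'v \<Rightarrow> 'v \<Rightarrow> bool"
  for deg nbr where
  refl: "reach_in deg nbr 0 u u"
| step: "adj deg nbr u w \<Longrightarrow> reach_in deg nbr n w v \<Longrightarrow> reach_in deg nbr (Suc n) u v"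

definition gdist :: "('v \<Rightarrow> nat) \<Rightarrow> ('v \<Rightarrow> nat \<Rightarrow> 'v) \<Rightarrow> 'v \<Rightarrow> 'v \<Rightarrow> nat" where
  "gdist deg nbr u v = (LEAST n. reach_in deg nbr n u v)"

text \<open>Connected simple undirected graph with distinct local port numbers at each node.\<close>
definition port_graph :: "'v set \<Rightarrow> ('v \<Rightarrow> nat) \<Rightarrow> ('v \<Rightarrow> nat \<Rightarrow> 'v) \<Rightarrow> bool" where
  "port_graph V deg nbr \<longleftrightarrow>
     V \<noteq> {} \<and>
     (\<forall>v\<in>V. \<forall>i<deg v. nbr v i \<in> V \<and> nbr v i \<noteq> v) \<and>
     (\<forall>v\<in>V. inj_on (nbr v) {..<deg v}) \<and>
     (\<forall>v\<in>V. \<forall>i<deg v. adj deg nbr (nbr v i) v) \<and>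
     (\<forall>u\<in>V. \<forall>v\<in>V. \<exists>n. reach_in deg nbr n u v)"

text \<open>A pure single-qubit state: a unit vector in C^2.\<close>
type_synonym qubit = "complex \<times> complex"

definition unit_qubit :: "qubit \<Rightarrow> bool" where
  "unit_qubit q \<longleftrightarrow> (cmod (fst q))\<^sup>2 + (cmod (snd q))\<^sup>2 = 1"

text \<open>Projective measurement in the orthonormal basis {b, b-perp}: outcome True
  (projection onto b) has probability |<b|psi>|^2 / |b|^2.\<close>
definition meas_prob :: "qubit \<Rightarrow> qubit \<Rightarrow> real" where
  "meas_prob b psi =
     (cmod (cnj (fst b) * fst psi + cnj (snd b) * snd psi))\<^sup>2
       / ((cmod (fst b))\<^sup>2 + (cmod (snd b))\<^sup>2)"

text \<open>An adaptive measurement protocol executed within one round: either decide a move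
  (None = stay, Some p = leave via port p) or measure a fresh emitted copy in a chosen
  basis and continue depending on the outcome.\<close>
datatype protocol = Decide "nat option" | Measure qubit "bool \<Rightarrow> protocol"

primrec run_protocol :: "qubit \<Rightarrow> protocol \<Rightarrow> nat option pmf" where
  "run_protocol psi (Decide m) = return_pmf m"
| "run_protocol psi (Measure b f) =
     bind_pmf (bernoulli_pmf (meas_prob b psi)) (\<lambda>r. (run_protocol psi \<circ> f) r)"

primrec num_meas :: "protocol \<Rightarrow> nat" where
  "num_meas (Decide m) = 0"
| "num_meas (Measure b f) = Suc (max ((num_meas \<circ> f) False) ((num_meas \<circ> f) True))"

text \<open>One round of the oblivious agent at node v: it sees only deg v and (if there is
  a pebble) the emitted qubits. The treasure node is absorbing (the hunt ends once
  the treasure is found).\<close>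
definition agent_step ::
  "('v \<Rightarrow> nat) \<Rightarrow> ('v \<Rightarrow> nat \<Rightarrow> 'v) \<Rightarrow> 'v \<Rightarrow> ('v \<Rightarrow> qubit option)
   \<Rightarrow> (nat \<Rightarrow> protocol) \<Rightarrow> (nat \<Rightarrow> nat option pmf) \<Rightarrow> 'v \<Rightarrow> 'v pmf" where
  "agent_step deg nbr t peb rule nopeb v =
     (if v = t then return_pmf v
      else map_pmf (\<lambda>m. case m of None \<Rightarrow> v
                                 | Some p \<Rightarrow> if p < deg v then nbr v p else v)
             (case peb v of None \<Rightarrow> nopeb (deg v)
                          | Some psi \<Rightarrow> run_protocol psi (rule (deg v))))"

definition agent_pos ::
  "('v \<Rightarrow> nat) \<Rightarrow> ('v \<Rightarrow> nat \<Rightarrow> 'v) \<Rightarrow> 'v \<Rightarrow> ('v \<Rightarrow> qubit option)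
   \<Rightarrow> (nat \<Rightarrow> protocol) \<Rightarrow> (nat \<Rightarrow> nat option pmf) \<Rightarrow> 'v \<Rightarrow> nat \<Rightarrow> 'v pmf" where
  "agent_pos deg nbr t peb rule nopeb s n =
     ((\<lambda>P. bind_pmf P (agent_step deg nbr t peb rule nopeb)) ^^ n) (return_pmf s)"

end

theory Submission
  imports Defs
begin

definition hq :: complex where "hq = complex_of_real (1 / sqrt 2)"

definition enc :: "nat \<Rightarrow> qubit" where
  "enc j = (if j = 0 then (1,0) else if j = 1 then (0,1) else if j = 2 then (hq, hq) else (hq, - hq))"

definition xprot :: protocol where
  "xprot = Measure (1,1) (\<lambda>r. Decide (Some (if r then 2 else 3)))"

fun trp :: "bool \<Rightarrow> nat \<Rightarrow> protocol" where
  "trp c 0 = Decide (Some (if c then 0 else 1))"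
| "trp c (Suc k) = Measure (1,0) (\<lambda>r. if r = c then trp c k else xprot)"

definition rp :: "nat \<Rightarrow> protocol" where
  "rp k = Measure (1,0) (\<lambda>c. trp c k)"

lemma cmod_hq2: "(cmod hq)^2 = 1/2"
  unfolding hq_def norm_of_real by (simp add: power_divide)

lemma unit_enc: "unit_qubit (enc j)"
  by (auto simp: unit_qubit_def enc_def cmod_hq2)

lemma mp_z: "meas_prob (1,0) psi = (cmod (fst psi))^2"
  by (simp add: meas_prob_def)

lemma mp_x2: "meas_prob (1,1) (hq,hq) = 1"
proof -
  have "cmod (hq + hq) ^ 2 = cmod (2 * hq) ^ 2" by simp
  also have "\<dots> = 4 * (cmod hq)^2" by (simp only: norm_mult power_mult_distrib) simp
  finally have "cmod (hq + hq) ^ 2 = 2" by (simp add: cmod_hq2)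
  then show ?thesis by (simp add: meas_prob_def)
qed

lemma mp_x3: "meas_prob (1,1) (hq,-hq) = 0"
  by (simp add: meas_prob_def)

lemma pmf_bind_bern: "0 \<le> p \<Longrightarrow> p \<le> 1 \<Longrightarrow>
  pmf (bind_pmf (bernoulli_pmf p) f) x = pmf (f True) x * p + pmf (f False) x * (1 - p)"
  by (simp add: pmf_bind)

lemma xprot_ok: "j = 2 \<or> j = 3 \<Longrightarrow> pmf (run_protocol (enc j) xprot) (Some j) = 1"
  by (auto simp: xprot_def enc_def pmf_bind_bern mp_x2 mp_x3)

lemma trp0: "pmf (run_protocol (enc 0) (trp True k)) (Some 0) = 1"
  by (induction k) (auto simp: enc_def pmf_bind_bern mp_z)

lemma trp1: "pmf (run_protocol (enc 1) (trp False k)) (Some 1) = 1"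
  by (induction k) (auto simp: enc_def pmf_bind_bern mp_z)

lemma trp23: "j = 2 \<or> j = 3 \<Longrightarrow> pmf (run_protocol (enc j) (trp c k)) (Some j) = 1 - (1/2)^k"
proof (induction k)
  case 0
  then show ?case by auto
next
  case (Suc k)
  have m: "meas_prob (1,0) (enc j) = 1/2" using Suc.prems by (auto simp: enc_def mp_z cmod_hq2)
  show ?case using Suc xprot_ok[OF Suc.prems]
    by (cases c) (auto simp: pmf_bind_bern m algebra_simps)
qed

lemma rp_ok: "j < 4 \<Longrightarrow> pmf (run_protocol (enc j) (rp k)) (Some j) \<ge> 1 - (1/2)^k"
proof -
  assume j: "j < 4"
  then consider "j = 0" | "j = 1" | "j = 2 \<or> j = 3" by linarith
  then show ?thesis
  proof cases
    case 1 then show ?thesis using trp0[of k] by (simp add: rp_def pmf_bind_bern enc_def mp_z)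
  next
    case 2 then show ?thesis using trp1[of k] by (simp add: rp_def pmf_bind_bern enc_def mp_z)
  next
    case 3
    have m: "meas_prob (1,0) (enc j) = 1/2" using 3 by (auto simp: enc_def mp_z cmod_hq2)
    show ?thesis using trp23[OF 3, of True k] trp23[OF 3, of False k] by (simp add: rp_def pmf_bind_bern m algebra_simps)
  qed
qed

lemma nm_trp: "num_meas (trp c k) \<le> k + 1"
  by (induction k) (auto simp: xprot_def)

lemma nm_rp: "num_meas (rp k) \<le> k + 2"
  using nm_trp[of True k] nm_trp[of False k] by (simp add: rp_def)

lemma funpow_bind:
  fixes f :: "'a \<Rightarrow> 'a pmf"
  shows "((\<lambda>P. bind_pmf P f) ^^ n) P = bind_pmf P (\<lambda>x. ((\<lambda>P. bind_pmf P f) ^^ n) (return_pmf x))"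
proof (induction n arbitrary: P)
  case 0
  show ?case by (simp only: funpow_0) (subst bind_return_pmf', simp)
next
  case (Suc n)
  show ?case
    apply (simp only: funpow.simps comp_def)
    apply (subst Suc.IH)
    apply (subst (2) Suc.IH)
    apply (simp add: bind_assoc_pmf bind_return_pmf)
    done
qed

lemma agent_pos_Suc:
  "agent_pos deg nbr t peb rule nopeb s (Suc n) =
   bind_pmf (agent_step deg nbr t peb rule nopeb s) (\<lambda>w. agent_pos deg nbr t peb rule nopeb w n)"
  unfolding agent_pos_def
  by (simp only: funpow_Suc_right comp_def bind_return_pmf) (rule funpow_bind)

lemma pmf_bind_ge: "pmf M w * pmf (g w) t \<le> pmf (bind_pmf M g) t"
proof -
  have "pmf (bind_pmf M g) t = measure_pmf.expectation M (\<lambda>x. pmf (g x) t)"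
    by (simp add: pmf_bind)
  also have "\<dots> \<ge> measure_pmf.expectation M (\<lambda>x. indicator {w} x * pmf (g w) t)"
    apply (rule integral_mono)
      apply (rule measure_pmf.integrable_const_bound[where B=1]; simp add: pmf_le_1 indicator_def)
     apply (rule measure_pmf.integrable_const_bound[where B=1]; simp add: pmf_le_1)
    by (simp add: indicator_def)
  moreover have "measure_pmf.expectation M (\<lambda>x. indicator {w} x * pmf (g w) t) = pmf M w * pmf (g w) t"
    by (simp add: measure_pmf_single)
  ultimately show ?thesis by linarith
qed

lemma pmf_map_ge: "pmf M x \<le> pmf (map_pmf g M) (g x)"
proof -
  have "pmf M x = measure M {x}" by (simp add: measure_pmf_single)
  also have "\<dots> \<le> measure M (g -` {g x})" by (rule measure_pmf.finite_measure_mono) auto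
  finally show ?thesis by (simp add: pmf_map)
qed

lemma reach0: "reach_in deg nbr 0 u v \<Longrightarrow> u = v"
  by (erule reach_in.cases) auto

lemma next_exists:
  assumes G: "port_graph V deg nbr" and v: "v \<in> V" and t: "t \<in> V"
    and d: "gdist deg nbr v t = Suc m"
  shows "\<exists>i<deg v. nbr v i \<in> V \<and> gdist deg nbr (nbr v i) t = m"
proof -
  have "\<exists>n. reach_in deg nbr n v t" using G v t unfolding port_graph_def by blast
  then have "reach_in deg nbr (gdist deg nbr v t) v t" unfolding gdist_def by (rule LeastI_ex)
  then have "reach_in deg nbr (Suc m) v t" using d by simp
  then obtain w where a: "adj deg nbr v w" and r: "reach_in deg nbr m w t"
    by (cases rule: reach_in.cases) auto
  from a obtain i where i: "i < deg v" "nbr v i = w" unfolding adj_def by blast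
  have wV: "w \<in> V" using G v i unfolding port_graph_def by blast
  have le: "gdist deg nbr w t \<le> m" using r unfolding gdist_def by (rule Least_le)
  have "reach_in deg nbr (gdist deg nbr w t) w t" using r unfolding gdist_def by (rule LeastI)
  with a have "reach_in deg nbr (Suc (gdist deg nbr w t)) v t" by (rule reach_in.step)
  then have "gdist deg nbr v t \<le> Suc (gdist deg nbr w t)" unfolding gdist_def by (rule Least_le)
  then have "gdist deg nbr w t = m" using le d by simp
  then show ?thesis using i wV by blast
qed

lemma gdist0:
  assumes G: "port_graph V deg nbr" and v: "v \<in> V" and t: "t \<in> V"
    and d: "gdist deg nbr v t = 0"
  shows "v = t"
proof -
  have "\<exists>n. reach_in deg nbr n v t" using G v t unfolding port_graph_def by blast
  then have "reach_in deg nbr (gdist deg nbr v t) v t" unfolding gdist_def by (rule LeastI_ex)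
  then show ?thesis using d reach0 by simp
qed

lemma gdist_self: "gdist deg nbr t t = 0"
  unfolding gdist_def by (rule Least_eq_0) (rule reach_in.refl)

lemma graph_part:
  fixes \<delta> :: real and k :: nat
  assumes dl: "\<delta> = (1/2)^k"
    and G: "port_graph V deg nbr" and deg4: "\<forall>v\<in>V. deg v \<le> 4" and sV: "s \<in> V" and tV: "t \<in> V"
    and gd: "gdist deg nbr s t = D"
  shows "\<exists>peb :: 'v \<Rightarrow> qubit option.
           (\<forall>v q. peb v = Some q \<longrightarrow> v \<in> V \<and> unit_qubit q) \<and>
           finite {v. peb v \<noteq> None} \<and> card {v. peb v \<noteq> None} \<le> D \<and>
           pmf (agent_pos deg nbr t peb (\<lambda>d. rp k) (\<lambda>d. return_pmf None) s D) t \<ge> (1 - \<delta>)^D"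
proof -
  define np where "np v = (SOME i. i < deg v \<and> nbr v i \<in> V \<and> gdist deg nbr (nbr v i) t = gdist deg nbr v t - 1)" for v
  define nx where "nx v = nbr v (np v)" for v
  define p where "p i = (nx ^^ i) s" for i
  define P where "P = p ` {..<D}"
  define peb where "peb v = (if v \<in> P then Some (enc (np v)) else None)" for v
  have np_ok: "np v < deg v \<and> nbr v (np v) \<in> V \<and> gdist deg nbr (nbr v (np v)) t = gdist deg nbr v t - 1"
    if vV: "v \<in> V" and vg: "gdist deg nbr v t > 0" for v
  proof -
    obtain m where "gdist deg nbr v t = Suc m" using vg gr0_implies_Suc by blast
    then have "\<exists>i. i < deg v \<and> nbr v i \<in> V \<and> gdist deg nbr (nbr v i) t = gdist deg nbr v t - 1"
      using next_exists[OF G vV tV] by auto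
    then show ?thesis unfolding np_def by (rule someI_ex)
  qed
  have pp: "p i \<in> V \<and> gdist deg nbr (p i) t = D - i" if "i \<le> D" for i
    using that
  proof (induction i)
    case 0
    then show ?case using sV gd by (simp add: p_def)
  next
    case (Suc i)
    then have IH: "p i \<in> V" "gdist deg nbr (p i) t = D - i" by auto
    have "gdist deg nbr (p i) t > 0" using IH Suc.prems by simp
    from np_ok[OF IH(1) this] have "nx (p i) \<in> V \<and> gdist deg nbr (nx (p i)) t = D - Suc i"
      using IH by (simp add: nx_def)
    moreover have "p (Suc i) = nx (p i)" by (simp add: p_def)
    ultimately show ?case by simp
  qed
  have pD: "p D = t" using pp[of D] gdist0[OF G _ tV] by simp
  have step_ok: "pmf (agent_step deg nbr t peb (\<lambda>d. rp k) (\<lambda>d. return_pmf None) (p i)) (p (Suc i)) \<ge> 1 - \<delta>"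
    if "i < D" for i
  proof -
    have pi: "p i \<in> V" "gdist deg nbr (p i) t = D - i" using pp[of i] that by auto
    have ne: "p i \<noteq> t" using pi that gdist_self[of deg nbr t] by auto
    have npo: "np (p i) < deg (p i)" using np_ok[of "p i"] pi that by simp
    have n4: "np (p i) < 4" using npo deg4 pi by fastforce
    have ps: "p (Suc i) = nbr (p i) (np (p i))" by (simp add: p_def nx_def)
    have pebi: "peb (p i) = Some (enc (np (p i)))" using that by (simp add: peb_def P_def)
    let ?g = "\<lambda>m. case m of None \<Rightarrow> p i | Some pp \<Rightarrow> if pp < deg (p i) then nbr (p i) pp else p i"
    have "1 - \<delta> \<le> pmf (run_protocol (enc (np (p i))) (rp k)) (Some (np (p i)))"
      using rp_ok[OF n4] dl by simp
    also have "\<dots> \<le> pmf (map_pmf ?g (run_protocol (enc (np (p i))) (rp k))) (?g (Some (np (p i))))"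
      by (rule pmf_map_ge)
    also have "\<dots> = pmf (agent_step deg nbr t peb (\<lambda>d. rp k) (\<lambda>d. return_pmf None) (p i)) (p (Suc i))"
      using ne pebi npo ps by (simp add: agent_step_def)
    finally show ?thesis .
  qed
  have d01: "0 \<le> 1 - \<delta>" using dl by (simp add: power_le_one)
  have bk: "pmf (agent_pos deg nbr t peb (\<lambda>d. rp k) (\<lambda>d. return_pmf None) (p (D - j)) j) t \<ge> (1 - \<delta>)^j"
    if "j \<le> D" for j
    using that
  proof (induction j)
    case 0
    then show ?case using pD by (simp add: agent_pos_def)
  next
    case (Suc j)
    define i where "i = D - Suc j"
    have i1: "D - j = Suc i" "D - Suc j = i" "i < D" using Suc.prems by (auto simp: i_def)
    have IH: "(1 - \<delta>)^j \<le> pmf (agent_pos deg nbr t peb (\<lambda>d. rp k) (\<lambda>d. return_pmf None) (p (Suc i)) j) t"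
      using Suc i1 by simp
    have "(1 - \<delta>)^Suc j = (1 - \<delta>) * (1 - \<delta>)^j" by simp
    also have "\<dots> \<le> pmf (agent_step deg nbr t peb (\<lambda>d. rp k) (\<lambda>d. return_pmf None) (p i)) (p (Suc i))
        * pmf (agent_pos deg nbr t peb (\<lambda>d. rp k) (\<lambda>d. return_pmf None) (p (Suc i)) j) t"
      by (rule mult_mono[OF step_ok[OF i1(3)] IH]) (simp_all add: d01 zero_le_power[OF d01])
    also have "\<dots> \<le> pmf (agent_pos deg nbr t peb (\<lambda>d. rp k) (\<lambda>d. return_pmf None) (p i) (Suc j)) t"
      unfolding agent_pos_Suc by (rule pmf_bind_ge)
    finally show ?case using i1 by simp
  qed
  have Peq: "{v. peb v \<noteq> None} = P" by (auto simp: peb_def)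
  have PV: "P \<subseteq> V" using pp by (auto simp: P_def)
  have h1: "\<forall>v q. peb v = Some q \<longrightarrow> v \<in> V \<and> unit_qubit q"
  proof (intro allI impI)
    fix v q assume a: "peb v = Some q"
    then have "v \<in> P" "q = enc (np v)" by (auto simp: peb_def split: if_splits)
    then show "v \<in> V \<and> unit_qubit q" using PV unit_enc by blast
  qed
  have h2: "finite {v. peb v \<noteq> None}" unfolding Peq P_def by simp
  have h3: "card {v. peb v \<noteq> None} \<le> D" unfolding Peq P_def
      using card_image_le[of "{..<D}" p] by simp
  have h4: "(1 - \<delta>)^D \<le> pmf (agent_pos deg nbr t peb (\<lambda>d. rp k) (\<lambda>d. return_pmf None) s D) t"
      using bk[of D] by (simp add: p_def)
  show ?thesis using h1 h2 h3 h4 by blast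
qed

theorem theorem5:
  fixes \<epsilon> :: real
  assumes "\<epsilon> > 0"
  shows "\<exists>C::real. \<forall>D::nat. \<exists>(rule :: nat \<Rightarrow> protocol) (nopeb :: nat \<Rightarrow> nat option pmf).
     (\<forall>d. real (num_meas (rule d)) \<le> C * (1 + ln (real D))) \<and>
     (\<forall>(V :: 'v set) deg nbr s t.
        port_graph V deg nbr \<and> (\<forall>v\<in>V. deg v \<le> 4) \<and> s \<in> V \<and> t \<in> V \<and>
        gdist deg nbr s t = D \<longrightarrow>
        (\<exists>peb :: 'v \<Rightarrow> qubit option.
           (\<forall>v q. peb v = Some q \<longrightarrow> v \<in> V \<and> unit_qubit q) \<and>
           finite {v. peb v \<noteq> None} \<and> card {v. peb v \<noteq> None} \<le> D \<and>
           pmf (agent_pos deg nbr t peb rule nopeb s D) t \<ge> 1 - \<epsilon>))"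
proof -
  obtain a :: nat where a: "(1/2::real)^a < \<epsilon>" using real_arch_pow_inv[of \<epsilon> "1/2"] assms by auto
  define C where "C = real a + 3 + 1 / ln 2"
  have main: "\<exists>(rule :: nat \<Rightarrow> protocol) (nopeb :: nat \<Rightarrow> nat option pmf).
     (\<forall>d. real (num_meas (rule d)) \<le> C * (1 + ln (real D))) \<and>
     (\<forall>(V :: 'v set) deg nbr s t.
        port_graph V deg nbr \<and> (\<forall>v\<in>V. deg v \<le> 4) \<and> s \<in> V \<and> t \<in> V \<and>
        gdist deg nbr s t = D \<longrightarrow>
        (\<exists>peb :: 'v \<Rightarrow> qubit option.
           (\<forall>v q. peb v = Some q \<longrightarrow> v \<in> V \<and> unit_qubit q) \<and>
           finite {v. peb v \<noteq> None} \<and> card {v. peb v \<noteq> None} \<le> D \<and>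
           pmf (agent_pos deg nbr t peb rule nopeb s D) t \<ge> 1 - \<epsilon>))" for D :: nat
  proof -
    define b where "b = nat \<lceil>log 2 (real D)\<rceil>"
    define k where "k = a + b"
    define L where "L = ln (real D)"
    have L0: "L \<ge> 0" unfolding L_def by (cases "D = 0") auto
    have bL: "real b \<le> L / ln 2 + 1"
    proof (cases "D = 0")
      case True then show ?thesis by (simp add: b_def L_def log_def)
    next
      case False
      then have "log 2 (real D) \<ge> 0" by simp
      then have "real b = of_int \<lceil>log 2 (real D)\<rceil>" unfolding b_def by simp
      also have "\<dots> \<le> log 2 (real D) + 1" by simp
      finally show ?thesis by (simp add: L_def log_def)
    qed
    have ln2: "ln (2::real) > 0" by simp
    have Cg: "C \<ge> 1 / ln 2" "C \<ge> real a + 3" using ln2 unfolding C_def by auto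
    have "(1 / ln 2) * L \<le> C * L" using Cg(1) L0 by (rule mult_right_mono)
    then have CL: "L / ln 2 \<le> C * L" by simp
    have "real (num_meas (rp k)) \<le> real k + 2" using nm_rp[of k] by simp
    also have "\<dots> \<le> C + C * L" using bL CL Cg unfolding k_def by simp
    also have "\<dots> = C * (1 + L)" by (simp add: algebra_simps)
    finally have nm: "real (num_meas (rp k)) \<le> C * (1 + ln (real D))" by (simp add: L_def)
    have Db: "real D \<le> 2 ^ b"
    proof (cases "D = 0")
      case True then show ?thesis by simp
    next
      case False
      then have lg: "log 2 (real D) \<ge> 0" by simp
      then have "log 2 (real D) \<le> real b" unfolding b_def by linarith
      then have "2 powr (log 2 (real D)) \<le> 2 powr (real b)" by simp
      then show ?thesis using False by (simp add: powr_realpow)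
    qed
    have pr: "real D * (1/2)^k \<le> \<epsilon>"
    proof -
      have "real D * (1/2)^k = (real D / 2^b) * (1/2)^a" by (simp add: k_def power_add power_divide)
      also have "\<dots> \<le> 1 * (1/2)^a" using Db by (intro mult_right_mono) auto
      finally show ?thesis using a by simp
    qed
    have gp: "\<exists>peb :: 'v \<Rightarrow> qubit option.
           (\<forall>v q. peb v = Some q \<longrightarrow> v \<in> V \<and> unit_qubit q) \<and>
           finite {v. peb v \<noteq> None} \<and> card {v. peb v \<noteq> None} \<le> D \<and>
           pmf (agent_pos deg nbr t peb (\<lambda>d. rp k) (\<lambda>d. return_pmf None) s D) t \<ge> 1 - \<epsilon>"
      if H: "port_graph V deg nbr \<and> (\<forall>v\<in>V. deg v \<le> 4) \<and> s \<in> V \<and> t \<in> V \<and> gdist deg nbr s t = D"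
      for V :: "'v set" and deg nbr s t
    proof -
      obtain peb :: "'v \<Rightarrow> qubit option" where
        p1: "(\<forall>v q. peb v = Some q \<longrightarrow> v \<in> V \<and> unit_qubit q)" and
        p2: "finite {v. peb v \<noteq> None}" and p3: "card {v. peb v \<noteq> None} \<le> D" and
        p4: "pmf (agent_pos deg nbr t peb (\<lambda>d. rp k) (\<lambda>d. return_pmf None) s D) t \<ge> (1 - (1/2)^k)^D"
        using graph_part[OF HOL.refl, of V deg nbr s t D k] H by blast
      have "-1 \<le> - ((1/2::real)^k)" by (simp add: power_le_one)
      from Bernoulli_inequality[OF this, of D]
      have "1 - real D * (1/2)^k \<le> (1 - (1/2)^k)^D" by simp
      then have "1 - \<epsilon> \<le> pmf (agent_pos deg nbr t peb (\<lambda>d. rp k) (\<lambda>d. return_pmf None) s D) t"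
        using p4 pr by linarith
      then show ?thesis using p1 p2 p3 by blast
    qed
    show ?thesis
      apply (rule exI[of _ "\<lambda>d. rp k"], rule exI[of _ "\<lambda>d. return_pmf None"])
      using nm gp by blast
  qed
  show ?thesis by (intro exI[of _ C] allI) (rule main)
qed

end
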